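(* Let $X$ be a countable set. (i) If $\mathcal{A}\subseteq\mathcal{P}_\infty(X)$ is hereditary and $\mathcal{A}^\perp$ is bisequential, then $\mathcal{A}$ is an M-family. (ii) If $\mathcal{I}$ is a bisequential ideal on $X$, then $\mathcal{I}^\perp$ is an M-family.
   Context: $\mathcal{P}_\infty(X)$: infinite subsets of $X$. Hereditary: closed under infinite subsets. An ideal on $X$ is a hereditary family of infinite subsets of $X$ closed under finite unions. $\mathcal{A}^\perp=\{B\in\mathcal{P}_\infty(X):B\cap A\text{ finite }\forall A\in\mathcal{A}\}$. An M-family is a hereditary family $\mathcal{A}$ such that for every sequence $(A_n)_n$ in $\mathcal{A}$ there is $A\in\mathcal{A}$ with $A\setminus\bigcup_{i\ge n}A_i$ finite for every $n$. For an ultrafilter $p$ on $X$, $p^*=\{X\setminus A:A\in p\}$. An ideal $\mathcal{I}$ is bisequential if for every ultrafilter $p$ on $X$ with $\mathcal{I}\subseteq p^*$ there is a sequence $(B_n)_n$ in $p^*$ such that every $L\in\mathcal{I}$ satisfies $L\setminus B_n$ finite for some $n$. *)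

theory Defs
  imports Main "HOL-Library.Countable_Set"
begin

definition Pinf :: "'a set \<Rightarrow> 'a set set" where
  "Pinf X = {A. A \<subseteq> X \<and> infinite A}"

definition hereditary :: "'a set \<Rightarrow> 'a set set \<Rightarrow> bool" where
  "hereditary X \<A> \<longleftrightarrow> \<A> \<subseteq> Pinf X \<and>
     (\<forall>B\<in>\<A>. \<forall>C. C \<subseteq> B \<and> infinite C \<longrightarrow> C \<in> \<A>)"

definition ideal_on :: "'a set \<Rightarrow> 'a set set \<Rightarrow> bool" where
  "ideal_on X \<I> \<longleftrightarrow> hereditary X \<I> \<and> (\<forall>A\<in>\<I>. \<forall>B\<in>\<I>. A \<union> B \<in> \<I>)"

definition perp :: "'a set \<Rightarrow> 'a set set \<Rightarrow> 'a set set" where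
  "perp X \<A> = {B \<in> Pinf X. \<forall>A\<in>\<A>. finite (B \<inter> A)}"

definition M_family :: "'a set \<Rightarrow> 'a set set \<Rightarrow> bool" where
  "M_family X \<A> \<longleftrightarrow> hereditary X \<A> \<and>
     (\<forall>An :: nat \<Rightarrow> 'a set. (\<forall>n. An n \<in> \<A>) \<longrightarrow>
        (\<exists>A\<in>\<A>. \<forall>n. finite (A - (\<Union>i\<in>{n..}. An i))))"

definition ultrafilter_on :: "'a set \<Rightarrow> 'a set set \<Rightarrow> bool" where
  "ultrafilter_on X p \<longleftrightarrow> p \<subseteq> Pow X \<and> X \<in> p \<and> {} \<notin> p \<and>
     (\<forall>A\<in>p. \<forall>B. A \<subseteq> B \<and> B \<subseteq> X \<longrightarrow> B \<in> p) \<and>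
     (\<forall>A\<in>p. \<forall>B\<in>p. A \<inter> B \<in> p) \<and>
     (\<forall>A. A \<subseteq> X \<longrightarrow> A \<in> p \<or> X - A \<in> p)"

definition dual_ideal :: "'a set \<Rightarrow> 'a set set \<Rightarrow> 'a set set" where
  "dual_ideal X p = {X - A | A. A \<in> p}"

definition bisequential :: "'a set \<Rightarrow> 'a set set \<Rightarrow> bool" where
  "bisequential X \<I> \<longleftrightarrow>
     (\<forall>p. ultrafilter_on X p \<and> \<I> \<subseteq> dual_ideal X p \<longrightarrow>
        (\<exists>B :: nat \<Rightarrow> 'a set. (\<forall>n. B n \<in> dual_ideal X p) \<and>
            (\<forall>L\<in>\<I>. \<exists>n. finite (L - B n))))"

end

theory Submission
  imports Defs
begin


definition filt_on :: "'a set \<Rightarrow> 'a set set \<Rightarrow> bool" where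
  "filt_on X q \<longleftrightarrow> q \<subseteq> Pow X \<and> {} \<notin> q \<and> (\<forall>a\<in>q. \<forall>b\<in>q. a \<inter> b \<in> q)
     \<and> (\<forall>a\<in>q. \<forall>b. a \<subseteq> b \<and> b \<subseteq> X \<longrightarrow> b \<in> q)"

lemma uf_exists:
  assumes FX: "F \<subseteq> Pow X" and Fne: "F \<noteq> {}" and F0: "{} \<notin> F"
    and Fint: "\<forall>a\<in>F. \<forall>b\<in>F. \<exists>c\<in>F. c \<subseteq> a \<inter> b"
  shows "\<exists>p. ultrafilter_on X p \<and> F \<subseteq> p"
proof -
  define up where "up = {b. b \<subseteq> X \<and> (\<exists>a\<in>F. a \<subseteq> b)}"
  have up: "filt_on X up"
    unfolding filt_on_def
  proof (intro conjI)
    show "up \<subseteq> Pow X" unfolding up_def by blast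
    show "{} \<notin> up" unfolding up_def using F0 by auto
    show "\<forall>a\<in>up. \<forall>b. a \<subseteq> b \<and> b \<subseteq> X \<longrightarrow> b \<in> up" unfolding up_def by blast
    show "\<forall>a\<in>up. \<forall>b\<in>up. a \<inter> b \<in> up"
    proof (intro ballI)
      fix a b assume "a \<in> up" "b \<in> up"
      then obtain a' b' where "a' \<in> F" "a' \<subseteq> a" "b' \<in> F" "b' \<subseteq> b" "a \<subseteq> X"
        unfolding up_def by blast
      note h = this
      have "\<exists>c\<in>F. c \<subseteq> a' \<inter> b'" using Fint h(1,3) by blast
      then obtain c where c: "c \<in> F" "c \<subseteq> a' \<inter> b'" by blast
      have "c \<subseteq> a \<inter> b" using c(2) h(2,4) by blast
      moreover have "a \<inter> b \<subseteq> X" using h(5) by blast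
      ultimately show "a \<inter> b \<in> up" unfolding up_def using c(1) by blast
    qed
  qed
  have Fup: "F \<subseteq> up" using FX unfolding up_def by auto
  define Fs where "Fs = {q. filt_on X q \<and> F \<subseteq> q}"
  have "\<forall>C\<in>chains Fs. \<exists>U\<in>Fs. \<forall>q\<in>C. q \<subseteq> U"
  proof
    fix C assume C: "C \<in> chains Fs"
    show "\<exists>U\<in>Fs. \<forall>q\<in>C. q \<subseteq> U"
    proof (cases "C = {}")
      case True
      then show ?thesis using up Fup unfolding Fs_def by auto
    next
      case False
      have CF: "C \<subseteq> Fs" and ch: "\<forall>x\<in>C. \<forall>y\<in>C. x \<subseteq> y \<or> y \<subseteq> x"
        using C unfolding chains_def chain_subset_def by auto
      have "filt_on X (\<Union>C)"
        unfolding filt_on_def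
      proof (intro conjI ballI allI impI)
        show "\<Union>C \<subseteq> Pow X" using CF unfolding Fs_def filt_on_def by blast
        show "{} \<notin> \<Union>C" using CF unfolding Fs_def filt_on_def by blast
      next
        fix a b assume "a \<in> \<Union>C" "b \<in> \<Union>C"
        then obtain q1 q2 where q: "q1 \<in> C" "q2 \<in> C" "a \<in> q1" "b \<in> q2" by auto
        then have "q1 \<subseteq> q2 \<or> q2 \<subseteq> q1" using ch by blast
        then show "a \<inter> b \<in> \<Union>C"
        proof
          assume "q1 \<subseteq> q2" then have "a \<inter> b \<in> q2" using q CF unfolding Fs_def filt_on_def by blast
          then show ?thesis using q by blast
        next
          assume "q2 \<subseteq> q1" then have "a \<inter> b \<in> q1" using q CF unfolding Fs_def filt_on_def by blast
          then show ?thesis using q by blast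
        qed
      next
        fix a b assume "a \<in> \<Union>C" "a \<subseteq> b \<and> b \<subseteq> X"
        then show "b \<in> \<Union>C" using CF unfolding Fs_def filt_on_def by blast
      qed
      moreover have "F \<subseteq> \<Union>C" using False CF unfolding Fs_def by blast
      ultimately show ?thesis unfolding Fs_def by blast
    qed
  qed
  from Zorn_Lemma2[OF this] obtain M where M: "M \<in> Fs" and max: "\<forall>q\<in>Fs. M \<subseteq> q \<longrightarrow> q = M"
    by blast
  have fM: "filt_on X M" and FM: "F \<subseteq> M" using M unfolding Fs_def by auto
  have XM: "X \<in> M"
  proof -
    obtain a where "a \<in> F" using Fne by auto
    then have "a \<in> M" "a \<subseteq> X" using FM FX by auto
    then show ?thesis using fM unfolding filt_on_def by blast
  qed
  have "ultrafilter_on X M"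
    unfolding ultrafilter_on_def
  proof (intro conjI ballI allI impI)
    show "M \<subseteq> Pow X" "{} \<notin> M" using fM unfolding filt_on_def by auto
    show "X \<in> M" by (rule XM)
  next
    fix a b assume "a \<in> M" "b \<in> M" then show "a \<inter> b \<in> M" using fM unfolding filt_on_def by blast
  next
    fix a b assume "a \<in> M" "a \<subseteq> b \<and> b \<subseteq> X" then show "b \<in> M" using fM unfolding filt_on_def by blast
  next
    fix A assume AX: "A \<subseteq> X"
    show "A \<in> M \<or> X - A \<in> M"
    proof (cases "\<exists>m\<in>M. m \<inter> A = {}")
      case True
      then obtain m where "m \<in> M" "m \<inter> A = {}" by blast
      moreover have "m \<subseteq> X" using \<open>m \<in> M\<close> fM unfolding filt_on_def by blast
      ultimately have "m \<subseteq> X - A" by blast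
      then have "X - A \<in> M" using fM \<open>m \<in> M\<close> unfolding filt_on_def by blast
      then show ?thesis by blast
    next
      case False
      define M' where "M' = {b. b \<subseteq> X \<and> (\<exists>m\<in>M. m \<inter> A \<subseteq> b)}"
      have M'I: "b \<in> M'" if "b \<subseteq> X" "m \<in> M" "m \<inter> A \<subseteq> b" for b m
        unfolding M'_def using that by blast
      have M'E: "\<exists>m. m \<in> M \<and> m \<inter> A \<subseteq> b \<and> b \<subseteq> X" if "b \<in> M'" for b
        using that unfolding M'_def by blast
      have Mi: "m1 \<inter> m2 \<in> M" if "m1 \<in> M" "m2 \<in> M" for m1 m2
        using fM that unfolding filt_on_def by blast
      have MX: "m \<subseteq> X" if "m \<in> M" for m using fM that unfolding filt_on_def by blast
      have "filt_on X M'"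
        unfolding filt_on_def
      proof (intro conjI ballI allI impI)
        fix a b assume "a \<in> M'" "b \<in> M'"
        then obtain m1 m2 where h: "m1 \<in> M" "m2 \<in> M" "m1 \<inter> A \<subseteq> a" "m2 \<inter> A \<subseteq> b" "a \<subseteq> X"
          using M'E by metis
        have "(m1 \<inter> m2) \<inter> A \<subseteq> a \<inter> b" using h(3,4) by blast
        moreover have "a \<inter> b \<subseteq> X" using h(5) by blast
        ultimately show "a \<inter> b \<in> M'" using M'I Mi h(1,2) by blast
      next
        show "M' \<subseteq> Pow X" using M'E by blast
        show "{} \<notin> M'"
        proof
          assume "{} \<in> M'"
          then obtain m where "m \<in> M" "m \<inter> A \<subseteq> {}" using M'E by blast
          then show False using False by blast
        qed
      next
        fix a b assume "a \<in> M'" "a \<subseteq> b \<and> b \<subseteq> X"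
        then obtain m where "m \<in> M" "m \<inter> A \<subseteq> a" using M'E by blast
        then show "b \<in> M'" using M'I \<open>a \<subseteq> b \<and> b \<subseteq> X\<close> by blast
      qed
      moreover have "M \<subseteq> M'"
      proof
        fix m assume "m \<in> M"
        then show "m \<in> M'" using M'I[of m m] MX by blast
      qed
      ultimately have "M' \<in> Fs" using FM unfolding Fs_def by blast
      then have "M' = M" using max \<open>M \<subseteq> M'\<close> by blast
      moreover have "A \<in> M'" using M'I[of A X] AX XM by blast
      ultimately show ?thesis by blast
    qed
  qed
  then show ?thesis using FM by blast
qed


lemma uf_up: "ultrafilter_on X p \<Longrightarrow> a \<in> p \<Longrightarrow> a \<subseteq> b \<Longrightarrow> b \<subseteq> X \<Longrightarrow> b \<in> p"
  unfolding ultrafilter_on_def by blast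
lemma uf_int: "ultrafilter_on X p \<Longrightarrow> a \<in> p \<Longrightarrow> b \<in> p \<Longrightarrow> a \<inter> b \<in> p"
  unfolding ultrafilter_on_def by blast
lemma uf_sub: "ultrafilter_on X p \<Longrightarrow> a \<in> p \<Longrightarrow> a \<subseteq> X"
  unfolding ultrafilter_on_def by blast
lemma uf_ne: "ultrafilter_on X p \<Longrightarrow> {} \<notin> p"
  unfolding ultrafilter_on_def by blast

lemma core_uf:
  fixes A :: "nat \<Rightarrow> 'a set" and S :: "'a set set"
  assumes AX: "\<forall>n. A n \<subseteq> X" and Ainf: "\<forall>n. infinite (A n)"
    and SX: "\<forall>s\<in>S. s \<subseteq> X" and Sfin: "\<forall>F. finite F \<and> F \<subseteq> X \<longrightarrow> F \<in> S"
    and Sun: "\<forall>s\<in>S. \<forall>t\<in>S. s \<union> t \<in> S"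
    and AS: "\<forall>n. \<forall>s\<in>S. finite (A n \<inter> s)"
  shows "\<exists>p. ultrafilter_on X p \<and> (\<forall>n. (\<Union>i\<in>{n..}. A i) \<in> p) \<and> (\<forall>s\<in>S. X - s \<in> p)"
proof -
  define D where "D n = (\<Union>i\<in>{n..}. A i)" for n
  define F where "F = {D n - s | n s. s \<in> S}"
  have DX: "D n \<subseteq> X" for n using AX unfolding D_def by auto
  have Dmono: "m \<le> n \<Longrightarrow> D n \<subseteq> D m" for m n unfolding D_def by (rule UN_mono) auto
  have e: "{} \<in> S" using Sfin by auto
  have F0: "D n - s \<in> F" if "s \<in> S" for n s unfolding F_def using that by blast
  have FE: "\<exists>n s. s \<in> S \<and> a = D n - s" if "a \<in> F" for a using that unfolding F_def by blast
  have "\<exists>p. ultrafilter_on X p \<and> F \<subseteq> p"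
  proof (rule uf_exists)
    show "F \<subseteq> Pow X" unfolding F_def using DX by auto
    show "F \<noteq> {}" unfolding F_def using e by auto
    show "{} \<notin> F"
    proof
      assume "{} \<in> F"
      then obtain n s where s: "s \<in> S" "D n - s = {}" using FE by metis
      have "A n - s \<subseteq> D n - s" unfolding D_def by auto
      hence "A n \<subseteq> A n \<inter> s" using s by auto
      moreover have "finite (A n \<inter> s)" using AS s(1) by blast
      ultimately have "finite (A n)" by (rule finite_subset)
      thus False using Ainf by auto
    qed
    show "\<forall>a\<in>F. \<forall>b\<in>F. \<exists>c\<in>F. c \<subseteq> a \<inter> b"
    proof (intro ballI)
      fix a b assume "a \<in> F" "b \<in> F"
      then obtain n s m t where h: "s \<in> S" "t \<in> S" "a = D n - s" "b = D m - t" using FE by metis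
      have "s \<union> t \<in> S" using Sun h(1,2) by blast
      then have 1: "D (max n m) - (s \<union> t) \<in> F" by (rule F0)
      have "D (max n m) \<subseteq> D n" "D (max n m) \<subseteq> D m" using Dmono by auto
      then have "D (max n m) - (s \<union> t) \<subseteq> a \<inter> b" unfolding h(3,4) by blast
      then show "\<exists>c\<in>F. c \<subseteq> a \<inter> b" using 1 by blast
    qed
  qed
  then obtain p where p: "ultrafilter_on X p" "F \<subseteq> p" by blast
  have FI: "D n - s \<in> p" if "s \<in> S" for n s
  proof -
    have "D n - s \<in> F" using F0 that by blast
    then show ?thesis using p(2) by blast
  qed
  have XS: "X - s \<in> p" if "s \<in> S" for s
  proof -
    have "D 0 - s \<in> p" using FI[OF that] by blast
    moreover have "D 0 - s \<subseteq> X - s" using DX by auto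
    moreover have "X - s \<subseteq> X" by blast
    ultimately show ?thesis by (rule uf_up[OF p(1)])
  qed
  have Dp: "D n \<in> p" for n using FI[OF e, of n] by simp
  have "\<forall>n. (\<Union>i\<in>{n..}. A i) \<in> p"
  proof
    fix n show "(\<Union>i\<in>{n..}. A i) \<in> p" using Dp[of n] unfolding D_def .
  qed
  moreover have "\<forall>s\<in>S. X - s \<in> p"
  proof
    fix s assume "s \<in> S"
    then show "X - s \<in> p" by (rule XS)
  qed
  ultimately show ?thesis using p(1) by blast
qed

lemma uf_inf:
  assumes p: "ultrafilter_on X p" and cof: "\<forall>F. finite F \<and> F \<subseteq> X \<longrightarrow> X - F \<in> p"
    and P: "P \<in> p" shows "infinite P"
proof
  assume "finite P"
  moreover have "P \<subseteq> X" using p P unfolding ultrafilter_on_def by blast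
  ultimately have "X - P \<in> p" using cof by blast
  hence "P \<inter> (X - P) \<in> p" using p P unfolding ultrafilter_on_def by blast
  thus False using p unfolding ultrafilter_on_def by auto
qed

lemma uf_Inter:
  fixes P :: "nat \<Rightarrow> 'a set" and k :: nat
  assumes p: "ultrafilter_on X p" and D: "D \<in> p" and P: "\<forall>j. P j \<in> p"
  shows "D \<inter> (\<Inter>j\<in>{..k}. P j) \<in> p"
proof (induction k)
  case 0 then show ?case using p D P unfolding ultrafilter_on_def by auto
next
  case (Suc k)
  have "D \<inter> (\<Inter>j\<in>{..Suc k}. P j) = (D \<inter> (\<Inter>j\<in>{..k}. P j)) \<inter> P (Suc k)"
    by (auto simp: atMost_Suc)
  then show ?case using Suc p P unfolding ultrafilter_on_def by metis
qed

lemma diag: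
  fixes X :: "'a set" and D P :: "nat \<Rightarrow> 'a set"
  assumes cX: "countable X" and p: "ultrafilter_on X p"
    and cof: "\<forall>F. finite F \<and> F \<subseteq> X \<longrightarrow> X - F \<in> p"
    and D: "\<forall>n. D n \<in> p" and Dmono: "\<forall>m n. m \<le> n \<longrightarrow> D n \<subseteq> D m"
    and P: "\<forall>j. P j \<in> p"
  shows "\<exists>C. C \<subseteq> X \<and> infinite C \<and> (\<forall>n. finite (C - D n)) \<and> (\<forall>n. finite (C - P n))
     \<and> (\<forall>n. infinite (C \<inter> P n))"
proof -
  obtain f :: "'a \<Rightarrow> nat" where f: "inj_on f X" using cX by (meson countable_def)
  define E where "E k = D k \<inter> (\<Inter>j\<in>{..k}. P j)" for k
  have Ep: "E k \<in> p" for k unfolding E_def using uf_Inter p D P by blast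
  have EX: "E k \<subseteq> X" for k using Ep p unfolding ultrafilter_on_def by blast
  have "\<exists>y\<in>E k. k \<le> f y" for k
  proof (rule ccontr)
    assume "\<not> ?thesis"
    hence "f ` E k \<subseteq> {..<k}" by auto
    hence "finite (f ` E k)" by (rule finite_subset) simp
    moreover have "inj_on f (E k)" using f EX by (rule inj_on_subset)
    ultimately have "finite (E k)" by (rule finite_imageD)
    thus False using uf_inf[OF p cof Ep] by blast
  qed
  then obtain x where x: "\<And>k. x k \<in> E k" "\<And>k. k \<le> f (x k)" by metis
  define C where "C = range x"
  have xX: "x k \<in> X" for k using x EX by blast
  have unb: "infinite (x ` {n..})" for n
  proof
    assume fin: "finite (x ` {n..})"
    then have "finite (f ` x ` {n..})" by (rule finite_imageI)
    then obtain M where M: "\<forall>y\<in>f ` x ` {n..}. y \<le> M" unfolding finite_nat_set_iff_bounded_le by blast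
    have "f (x (max n (Suc M))) \<in> f ` x ` {n..}" by auto
    hence "f (x (max n (Suc M))) \<le> M" using M by blast
    moreover have "max n (Suc M) \<le> f (x (max n (Suc M)))" using x(2) by blast
    ultimately show False by simp
  qed
  have xD: "k \<ge> n \<Longrightarrow> x k \<in> D n" for k n
  proof -
    assume "k \<ge> n"
    then have "D k \<subseteq> D n" using Dmono by blast
    moreover have "x k \<in> D k" using x(1)[of k] unfolding E_def by blast
    ultimately show ?thesis by blast
  qed
  have xP: "j \<le> k \<Longrightarrow> x k \<in> P j" for j k
  proof -
    assume "j \<le> k"
    moreover have "x k \<in> (\<Inter>j\<in>{..k}. P j)" using x(1)[of k] unfolding E_def by blast
    ultimately show ?thesis by simp
  qed
  have "C - D n \<subseteq> x ` {..<n}" for n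
  proof
    fix y assume "y \<in> C - D n"
    then obtain k where k: "y = x k" "x k \<notin> D n" unfolding C_def by blast
    then have "k < n" using xD not_less by blast
    then show "y \<in> x ` {..<n}" using k by blast
  qed
  hence 1: "finite (C - D n)" for n by (rule finite_subset) simp
  have "C - P n \<subseteq> x ` {..<n}" for n
  proof
    fix y assume "y \<in> C - P n"
    then obtain k where k: "y = x k" "x k \<notin> P n" unfolding C_def by blast
    then have "k < n" using xP not_less by blast
    then show "y \<in> x ` {..<n}" using k by blast
  qed
  hence 2: "finite (C - P n)" for n by (rule finite_subset) simp
  have "x ` {n..} \<subseteq> C \<inter> P n" for n unfolding C_def using xP by auto
  hence 3: "infinite (C \<inter> P n)" for n using unb by (meson finite_subset)
  have "infinite C" using unb[of 0] unfolding C_def by auto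
  moreover have "C \<subseteq> X" unfolding C_def using xX by auto
  ultimately show ?thesis
    apply (intro exI[of _ C])
    using 1 2 3 by simp
qed

theorem proposition6:
  fixes X :: "'a set"
  assumes "countable X"
  shows "(\<forall>\<A>. hereditary X \<A> \<and> bisequential X (perp X \<A>) \<longrightarrow> M_family X \<A>)
       \<and> (\<forall>\<I>. ideal_on X \<I> \<and> bisequential X \<I> \<longrightarrow> M_family X (perp X \<I>))"
proof (intro conjI allI impI)
  fix \<A> assume H: "hereditary X \<A> \<and> bisequential X (perp X \<A>)"
  show "M_family X \<A>"
    unfolding M_family_def
  proof (intro conjI allI impI)
    show "hereditary X \<A>" using H by blast
    fix An :: "nat \<Rightarrow> 'a set" assume An: "\<forall>n. An n \<in> \<A>"
    define D where "D n = (\<Union>i\<in>{n..}. An i)" for n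
    have Deq: "(\<Union>i\<in>{n..}. An i) = D n" for n by (simp add: D_def)
    have AP: "An n \<in> Pinf X" for n using An H unfolding hereditary_def by blast
    define S where "S = {s. s \<subseteq> X \<and> (\<forall>B\<in>\<A>. finite (s \<inter> B))}"
    have "\<exists>p. ultrafilter_on X p \<and> (\<forall>n. (\<Union>i\<in>{n..}. An i) \<in> p) \<and> (\<forall>s\<in>S. X - s \<in> p)"
    proof (rule core_uf)
      show "\<forall>n. An n \<subseteq> X" "\<forall>n. infinite (An n)" using AP unfolding Pinf_def by auto
      show "\<forall>s\<in>S. s \<subseteq> X" unfolding S_def by auto
      show "\<forall>F. finite F \<and> F \<subseteq> X \<longrightarrow> F \<in> S" unfolding S_def by auto
      show "\<forall>s\<in>S. \<forall>t\<in>S. s \<union> t \<in> S" unfolding S_def by (auto simp: Int_Un_distrib2)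
      show "\<forall>n. \<forall>s\<in>S. finite (An n \<inter> s)" using An unfolding S_def by (auto simp: Int_commute)
    qed
    then obtain p where p: "ultrafilter_on X p" "\<forall>n. D n \<in> p" "\<forall>s\<in>S. X - s \<in> p"
      unfolding Deq by blast
    have cof: "\<forall>F. finite F \<and> F \<subseteq> X \<longrightarrow> X - F \<in> p" using p(3) unfolding S_def by auto
    have "perp X \<A> \<subseteq> dual_ideal X p"
    proof
      fix B assume "B \<in> perp X \<A>"
      hence "B \<in> S" "B \<subseteq> X" unfolding perp_def S_def Pinf_def by (auto simp: Int_commute)
      hence "X - B \<in> p" "B = X - (X - B)" using p(3) by auto
      thus "B \<in> dual_ideal X p" unfolding dual_ideal_def by blast
    qed
    then have pI: "ultrafilter_on X p \<and> perp X \<A> \<subseteq> dual_ideal X p" using p(1) by blast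
    have bis: "bisequential X (perp X \<A>)" using H by blast
    have "\<exists>B :: nat \<Rightarrow> 'a set. (\<forall>n. B n \<in> dual_ideal X p) \<and> (\<forall>L\<in>perp X \<A>. \<exists>n. finite (L - B n))"
      using pI by (rule mp[OF spec[OF bis[unfolded bisequential_def]]])
    then obtain B :: "nat \<Rightarrow> 'a set" where B: "\<forall>n. B n \<in> dual_ideal X p" "\<forall>L\<in>perp X \<A>. \<exists>n. finite (L - B n)"
      by blast
    have "\<exists>P. P \<in> p \<and> B n = X - P" for n
    proof -
      have "B n \<in> {X - A | A. A \<in> p}" using B(1) unfolding dual_ideal_def by blast
      then show ?thesis by blast
    qed
    then have "\<forall>n. \<exists>P. P \<in> p \<and> B n = X - P" by blast
    then have "\<exists>P. \<forall>n. P n \<in> p \<and> B n = X - P n" by (rule choice)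
    then obtain P :: "nat \<Rightarrow> 'a set" where P: "\<forall>n. P n \<in> p" "\<forall>n. B n = X - P n" by blast
    have Dm: "\<forall>m n. m \<le> n \<longrightarrow> D n \<subseteq> D m" unfolding D_def by (intro allI impI; rule UN_mono; auto)
    have "\<exists>C. C \<subseteq> X \<and> infinite C \<and> (\<forall>n. finite (C - D n)) \<and> (\<forall>n. finite (C - P n))
     \<and> (\<forall>n. infinite (C \<inter> P n))" using assms p(1) cof p(2) Dm P(1) by (rule diag)
    then obtain C where C: "C \<subseteq> X" "infinite C" "\<forall>n. finite (C - D n)" "\<forall>n. infinite (C \<inter> P n)"
      by blast
    have "C \<notin> perp X \<A>"
    proof
      assume "C \<in> perp X \<A>"
      then obtain n where "finite (C - B n)" using B by blast
      moreover have "C - B n = C \<inter> P n" using P(2) C(1) by auto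
      ultimately show False using C(4) by auto
    qed
    then obtain A' where A': "A' \<in> \<A>" "infinite (C \<inter> A')"
      using C(1,2) unfolding perp_def Pinf_def by auto
    have "C \<inter> A' \<in> \<A>" using H A' unfolding hereditary_def by blast
    moreover have "finite ((C \<inter> A') - D n)" for n
    proof (rule finite_subset)
      show "(C \<inter> A') - D n \<subseteq> C - D n" by blast
      show "finite (C - D n)" using C(3) by blast
    qed
    ultimately show "\<exists>A\<in>\<A>. \<forall>n. finite (A - (\<Union>i\<in>{n..}. An i))"
      unfolding Deq by blast
  qed
next
  fix \<I> assume H: "ideal_on X \<I> \<and> bisequential X \<I>"
  have hI: "hereditary X \<I>" using H unfolding ideal_on_def by blast
  show "M_family X (perp X \<I>)"
    unfolding M_family_def
  proof (intro conjI allI impI)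
    show "hereditary X (perp X \<I>)" unfolding hereditary_def
    proof (intro conjI ballI allI impI)
      show "perp X \<I> \<subseteq> Pinf X" unfolding perp_def by blast
      fix B C assume "B \<in> perp X \<I>" "C \<subseteq> B \<and> infinite C"
      then show "C \<in> perp X \<I>" unfolding perp_def Pinf_def
        by (auto intro: finite_subset[of "C \<inter> _" "B \<inter> _"])
    qed
    fix An :: "nat \<Rightarrow> 'a set" assume An: "\<forall>n. An n \<in> perp X \<I>"
    define D where "D n = (\<Union>i\<in>{n..}. An i)" for n
    have Deq: "(\<Union>i\<in>{n..}. An i) = D n" for n by (simp add: D_def)
    define S where "S = {s. s \<subseteq> X \<and> (\<exists>L G. finite G \<and> (L \<in> \<I> \<or> L = {}) \<and> s \<subseteq> L \<union> G)}"
    have S_fin: "F \<in> S" if "finite F" "F \<subseteq> X" for F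
      unfolding S_def using that by (intro CollectI conjI exI[of _ "{}"] exI[of _ F]) auto
    have S_L: "L \<in> S" if "L \<in> \<I>" "L \<subseteq> X" for L
      unfolding S_def using that by (intro CollectI conjI exI[of _ L] exI[of _ "{}"]) auto
    have S1: "\<forall>s\<in>S. \<forall>t\<in>S. s \<union> t \<in> S"
    proof (intro ballI)
      fix s t assume "s \<in> S" "t \<in> S"
      then obtain L G L' G' where "finite G" "L \<in> \<I> \<or> L = {}" "s \<subseteq> L \<union> G" "s \<subseteq> X"
         "finite G'" "L' \<in> \<I> \<or> L' = {}" "t \<subseteq> L' \<union> G'" "t \<subseteq> X" unfolding S_def by blast
      moreover have "L \<union> L' \<in> \<I> \<or> L \<union> L' = {}" using calculation H unfolding ideal_on_def by auto
      ultimately show "s \<union> t \<in> S" unfolding S_def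
        by (intro CollectI conjI exI[of _ "L \<union> L'"] exI[of _ "G \<union> G'"]) auto
    qed
    have S2: "\<forall>n. \<forall>s\<in>S. finite (An n \<inter> s)"
    proof (intro allI ballI)
      fix n s assume "s \<in> S"
      then obtain L G where LG: "finite G" "L \<in> \<I> \<or> L = {}" "s \<subseteq> L \<union> G" unfolding S_def by blast
      have "finite (An n \<inter> L)" using LG(2) An unfolding perp_def by auto
      hence "finite (An n \<inter> (L \<union> G))" using LG(1) by (simp add: Int_Un_distrib)
      moreover have "An n \<inter> s \<subseteq> An n \<inter> (L \<union> G)" using LG(3) by blast
      ultimately show "finite (An n \<inter> s)" by (rule finite_subset[rotated])
    qed
    have "\<exists>p. ultrafilter_on X p \<and> (\<forall>n. (\<Union>i\<in>{n..}. An i) \<in> p) \<and> (\<forall>s\<in>S. X - s \<in> p)"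
    proof (rule core_uf)
      show "\<forall>n. An n \<subseteq> X" "\<forall>n. infinite (An n)" using An unfolding perp_def Pinf_def by auto
      show "\<forall>s\<in>S. s \<subseteq> X" unfolding S_def by auto
      show "\<forall>F. finite F \<and> F \<subseteq> X \<longrightarrow> F \<in> S" using S_fin by blast
    qed (use S1 S2 in auto)
    then obtain p where p: "ultrafilter_on X p" "\<forall>n. D n \<in> p" "\<forall>s\<in>S. X - s \<in> p"
      unfolding Deq by blast
    have cof: "\<forall>F. finite F \<and> F \<subseteq> X \<longrightarrow> X - F \<in> p" using p(3) S_fin by blast
    have "\<I> \<subseteq> dual_ideal X p"
    proof
      fix L assume "L \<in> \<I>"
      moreover have "L \<subseteq> X" using calculation hI unfolding hereditary_def Pinf_def by blast
      ultimately have "L \<in> S" by (rule S_L)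
      hence "X - L \<in> p" "L = X - (X - L)" using p(3) \<open>L \<subseteq> X\<close> by auto
      thus "L \<in> dual_ideal X p" unfolding dual_ideal_def by blast
    qed
    then have pI: "ultrafilter_on X p \<and> \<I> \<subseteq> dual_ideal X p" using p(1) by blast
    have bis: "bisequential X \<I>" using H by blast
    have "\<exists>B :: nat \<Rightarrow> 'a set. (\<forall>n. B n \<in> dual_ideal X p) \<and> (\<forall>L\<in>\<I>. \<exists>n. finite (L - B n))"
      using pI by (rule mp[OF spec[OF bis[unfolded bisequential_def]]])
    then obtain B :: "nat \<Rightarrow> 'a set" where B: "\<forall>n. B n \<in> dual_ideal X p" "\<forall>L\<in>\<I>. \<exists>n. finite (L - B n)"
      by blast
    have "\<exists>P. P \<in> p \<and> B n = X - P" for n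
    proof -
      have "B n \<in> {X - A | A. A \<in> p}" using B(1) unfolding dual_ideal_def by blast
      then show ?thesis by blast
    qed
    then have "\<forall>n. \<exists>P. P \<in> p \<and> B n = X - P" by blast
    then have "\<exists>P. \<forall>n. P n \<in> p \<and> B n = X - P n" by (rule choice)
    then obtain P :: "nat \<Rightarrow> 'a set" where P: "\<forall>n. P n \<in> p" "\<forall>n. B n = X - P n" by blast
    have Dm: "\<forall>m n. m \<le> n \<longrightarrow> D n \<subseteq> D m" unfolding D_def by (intro allI impI; rule UN_mono; auto)
    have "\<exists>C. C \<subseteq> X \<and> infinite C \<and> (\<forall>n. finite (C - D n)) \<and> (\<forall>n. finite (C - P n))
     \<and> (\<forall>n. infinite (C \<inter> P n))" using assms p(1) cof p(2) Dm P(1) by (rule diag)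
    then obtain C where C: "C \<subseteq> X" "infinite C" "\<forall>n. finite (C - D n)" "\<forall>n. finite (C - P n)"
      by blast
    have "C \<in> perp X \<I>"
      unfolding perp_def Pinf_def
    proof (intro CollectI conjI ballI)
      fix L assume "L \<in> \<I>"
      then obtain n where n: "finite (L - B n)" using B by blast
      have "L \<subseteq> X" using \<open>L \<in> \<I>\<close> hI unfolding hereditary_def Pinf_def by blast
      hence "L - B n = L \<inter> P n" using P(2) by auto
      hence "finite (L \<inter> P n)" using n by simp
      moreover have "C \<inter> L \<subseteq> (C - P n) \<union> (L \<inter> P n)" by auto
      moreover have "finite (C - P n)" using C(4) by blast
      ultimately have "finite ((C - P n) \<union> (L \<inter> P n))" by blast
      then show "finite (C \<inter> L)" using \<open>C \<inter> L \<subseteq> (C - P n) \<union> (L \<inter> P n)\<close> by (rule finite_subset[rotated])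
    qed (use C in auto)
    then show "\<exists>B\<in>perp X \<I>. \<forall>n. finite (B - (\<Union>i\<in>{n..}. An i))"
      using C(3) unfolding Deq by blast
  qed
qed
end
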